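(* Assume the linear payoff assumption and the rank condition $\operatorname{rank}\begin{bmatrix}A(\nu^* )\\ B(\mu^* )\end{bmatrix}=d$. Let $(a^k,b^k)$, $k=1,\dots,N$, be i.i.d. with $a^k\sim\mu^*$ and $b^k\sim\nu^*$ independent. Let $$\widehat\mu(a)=\frac1N\sum_k\mathbf 1\{a^k=a\},\qquad \widehat\nu(b)=\frac1N\sum_k\mathbf 1\{b^k=b\}$$ be the frequency estimators. Let $\widehat\theta$ be the least-squares minimizer of $$\Big\|\begin{bmatrix}A(\widehat\nu)\\ B(\widehat\mu)\end{bmatrix}\theta-\begin{bmatrix}c(\widehat\mu)\\ d(\widehat\nu)\end{bmatrix}\Big\|^2,$$ and set $\widehat Q(a,b)=\langle\phi(a,b),\widehat\theta\rangle$. Then there is a constant $C>0$, depending only on $\phi,\eta,\mu^*,\nu^*$, with the following property. For every $\delta\in(0,1)$ there is $N_0(\delta)$ such that for all $N\ge N_0(\delta)$, with probability at least $1-\delta$, $$\|\widehat Q-Q\|_F^2\le C\,\frac{m^2+n^2+(m+n)\log(1/\delta)}{N}.$$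
   Context: Let $m,n\ge 2$, $\mathcal A=\{1,\dots,m\}$, $\mathcal B=\{1,\dots,n\}$, and $\eta>0$. For a payoff matrix $Q\in\mathbb{R}^{m\times n}$, the entropy-regularized zero-sum matrix game is $$\max_{\mu\in\Delta(\mathcal A)}\min_{\nu\in\Delta(\mathcal B)}\ \mu^\top Q\nu+\eta^{-1}\mathcal H(\mu)-\eta^{-1}\mathcal H(\nu),\qquad \mathcal H(\pi)=-\sum_i\pi_i\log\pi_i .$$ Its unique saddle point, the quantal response equilibrium (QRE) $(\mu,\nu)$, is characterized by $$\mu(a)=\frac{\exp\big(\eta\sum_b Q(a,b)\nu(b)\big)}{\sum_{a'}\exp\big(\eta\sum_bQ(a',b)\nu(b)\big)},\qquad \nu(b)=\frac{\exp\big(-\eta\sum_a Q(a,b)\mu(a)\big)}{\sum_{b'}\exp\big(-\eta\sum_aQ(a,b')\mu(a)\big)}.$$ Linear payoff assumption: there are a feature map $\phi:\mathcal A\times\mathcal B\to\mathbb{R}^d$ and $\theta^*\in\mathbb{R}^d$ with $\|\theta^*\|^2\le M$ such that $Q(a,b)=\langle\phi(a,b),\theta^*\rangle$ for all $(a,b)$. $(\mu^*,\nu^* )$ denotes the QRE of this $Q$; all its entries are positive. For $\mu\in\Delta(\mathcal A)$ and $\nu\in\Delta(\mathcal B)$ with positive entries, define: - $A(\nu)\in\mathbb{R}^{(m-1)\times d}$, whose row indexed by $a=2,\dots,m$ is $\sum_{b}\nu(b)\,(\phi(a,b)-\phi(1,b))^\top$; - $B(\mu)\in\mathbb{R}^{(n-1)\times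 d}$, whose row indexed by $b=2,\dots,n$ is $\sum_a\mu(a)\,(\phi(a,b)-\phi(a,1))^\top$; - $c(\mu)=\big(\eta^{-1}\log(\mu(a)/\mu(1))\big)_{a=2}^m\in\mathbb{R}^{m-1}$; - $d(\nu)=\big(-\eta^{-1}\log(\nu(b)/\nu(1))\big)_{b=2}^n\in\mathbb{R}^{n-1}$. *)

theory Defs
  imports "HOL-Analysis.Analysis"
begin

text \<open>Action sets are {1..m} and {1..n}; strategies are functions nat => real
  (only their values on the action set matter). Features take values in an
  abstract Euclidean space 'v, so d = DIM('v).\<close>

definition linQ :: "(nat \<Rightarrow> nat \<Rightarrow> 'v::real_inner) \<Rightarrow> 'v \<Rightarrow> nat \<Rightarrow> nat \<Rightarrow> real" where
  "linQ \<phi> \<theta> a b = inner (\<phi> a b) \<theta>"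

definition is_QRE :: "nat \<Rightarrow> nat \<Rightarrow> real \<Rightarrow> (nat \<Rightarrow> nat \<Rightarrow> real) \<Rightarrow>
    (nat \<Rightarrow> real) \<Rightarrow> (nat \<Rightarrow> real) \<Rightarrow> bool" where
  "is_QRE m n \<eta> Q \<mu> \<nu> \<longleftrightarrow>
     (\<forall>a\<in>{1..m}. \<mu> a = exp (\<eta> * (\<Sum>b=1..n. Q a b * \<nu> b)) /
                        (\<Sum>a'=1..m. exp (\<eta> * (\<Sum>b=1..n. Q a' b * \<nu> b)))) \<and>
     (\<forall>b\<in>{1..n}. \<nu> b = exp (- \<eta> * (\<Sum>a=1..m. Q a b * \<mu> a)) /
                        (\<Sum>b'=1..n. exp (- \<eta> * (\<Sum>a=1..m. Q a b' * \<mu> a))))"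

text \<open>Rows of A(nu) (indexed a = 2..m) and of B(mu) (indexed b = 2..n).\<close>
definition rowA :: "nat \<Rightarrow> (nat \<Rightarrow> nat \<Rightarrow> 'v::real_vector) \<Rightarrow> (nat \<Rightarrow> real) \<Rightarrow> nat \<Rightarrow> 'v" where
  "rowA n \<phi> \<nu> a = (\<Sum>b=1..n. \<nu> b *\<^sub>R (\<phi> a b - \<phi> 1 b))"

definition rowB :: "nat \<Rightarrow> (nat \<Rightarrow> nat \<Rightarrow> 'v::real_vector) \<Rightarrow> (nat \<Rightarrow> real) \<Rightarrow> nat \<Rightarrow> 'v" where
  "rowB m \<phi> \<mu> b = (\<Sum>a=1..m. \<mu> a *\<^sub>R (\<phi> a b - \<phi> a 1))"

definition vec_c :: "real \<Rightarrow> (nat \<Rightarrow> real) \<Rightarrow> nat \<Rightarrow> real" where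
  "vec_c \<eta> \<mu> a = ln (\<mu> a / \<mu> 1) / \<eta>"

definition vec_d :: "real \<Rightarrow> (nat \<Rightarrow> real) \<Rightarrow> nat \<Rightarrow> real" where
  "vec_d \<eta> \<nu> b = - (ln (\<nu> b / \<nu> 1) / \<eta>)"

definition stacked_rank :: "nat \<Rightarrow> nat \<Rightarrow> (nat \<Rightarrow> nat \<Rightarrow> 'v::euclidean_space) \<Rightarrow>
    (nat \<Rightarrow> real) \<Rightarrow> (nat \<Rightarrow> real) \<Rightarrow> nat" where
  "stacked_rank m n \<phi> \<mu> \<nu> =
     dim (span (rowA n \<phi> \<nu> ` {2..m} \<union> rowB m \<phi> \<mu> ` {2..n}))"

definition ls_obj :: "nat \<Rightarrow> nat \<Rightarrow> real \<Rightarrow> (nat \<Rightarrow> nat \<Rightarrow> 'v::euclidean_space) \<Rightarrow>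
    (nat \<Rightarrow> real) \<Rightarrow> (nat \<Rightarrow> real) \<Rightarrow> 'v \<Rightarrow> real" where
  "ls_obj m n \<eta> \<phi> \<mu> \<nu> \<theta> =
     (\<Sum>a=2..m. (inner (rowA n \<phi> \<nu> a) \<theta> - vec_c \<eta> \<mu> a)\<^sup>2) +
     (\<Sum>b=2..n. (inner (rowB m \<phi> \<mu> b) \<theta> - vec_d \<eta> \<nu> b)\<^sup>2)"

definition freqA :: "nat \<Rightarrow> (nat \<Rightarrow> nat \<times> nat) \<Rightarrow> nat \<Rightarrow> real" where
  "freqA N s a = real (card {k\<in>{..<N}. fst (s k) = a}) / real N"

definition freqB :: "nat \<Rightarrow> (nat \<Rightarrow> nat \<times> nat) \<Rightarrow> nat \<Rightarrow> real" where
  "freqB N s b = real (card {k\<in>{..<N}. snd (s k) = b}) / real N"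

definition frob_dist2 :: "nat \<Rightarrow> nat \<Rightarrow> (nat \<Rightarrow> nat \<Rightarrow> real) \<Rightarrow> (nat \<Rightarrow> nat \<Rightarrow> real) \<Rightarrow> real" where
  "frob_dist2 m n P Q = (\<Sum>a=1..m. \<Sum>b=1..n. (P a b - Q a b)\<^sup>2)"

text \<open>Probability of an event E under N i.i.d. draws (a^k, b^k), with a^k ~ mu
  and b^k ~ nu independent: the product distribution on the finite sample
  space {..<N} ->_E ({1..m} x {1..n}).\<close>
definition iid_prob :: "nat \<Rightarrow> nat \<Rightarrow> nat \<Rightarrow> (nat \<Rightarrow> real) \<Rightarrow> (nat \<Rightarrow> real) \<Rightarrow>
    ((nat \<Rightarrow> nat \<times> nat) \<Rightarrow> bool) \<Rightarrow> real" where
  "iid_prob m n N \<mu> \<nu> E =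
     (\<Sum>s\<in>{s \<in> {..<N} \<rightarrow>\<^sub>E ({1..m} \<times> {1..n}). E s}.
        \<Prod>k<N. \<mu> (fst (s k)) * \<nu> (snd (s k)))"

end

theory Submission
  imports Defs
begin


lemma ls_perturb:
  fixes rh :: "'i \<Rightarrow> 'v::euclidean_space"
  assumes fin: "finite I"
    and exact: "\<forall>i\<in>I. r i \<bullet> \<theta>s = c i"
    and minim: "\<forall>\<theta>. (\<Sum>i\<in>I. (rh i \<bullet> \<theta>h - ch i)\<^sup>2) \<le> (\<Sum>i\<in>I. (rh i \<bullet> \<theta> - ch i)\<^sup>2)"
    and coer: "\<forall>v. \<kappa> * (norm v)\<^sup>2 \<le> (\<Sum>i\<in>I. (rh i \<bullet> v)\<^sup>2)" and kpos: "\<kappa> > 0"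
  shows "(norm (\<theta>h - \<theta>s))\<^sup>2 \<le> 4 / \<kappa> * (\<Sum>i\<in>I. (rh i \<bullet> \<theta>s - ch i)\<^sup>2)"
proof -
  have pt: "(rh i \<bullet> (\<theta>h - \<theta>s))\<^sup>2 \<le> 2 * (rh i \<bullet> \<theta>h - ch i)\<^sup>2 + 2 * (rh i \<bullet> \<theta>s - ch i)\<^sup>2" for i
  proof -
    have e: "rh i \<bullet> (\<theta>h - \<theta>s) = (rh i \<bullet> \<theta>h - ch i) - (rh i \<bullet> \<theta>s - ch i)"
      by (simp add: inner_diff_right)
    have sq: "(x - y)\<^sup>2 \<le> 2 * x\<^sup>2 + 2 * y\<^sup>2" for x y :: real
      proof -
      have "0 \<le> (x + y)\<^sup>2" by simp
      thus ?thesis by (simp add: power2_eq_square algebra_simps)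
    qed
    show ?thesis unfolding e by (rule sq)
  qed
  have "\<kappa> * (norm (\<theta>h - \<theta>s))\<^sup>2 \<le> (\<Sum>i\<in>I. (rh i \<bullet> (\<theta>h - \<theta>s))\<^sup>2)" using coer by blast
  also have "\<dots> \<le> (\<Sum>i\<in>I. 2 * (rh i \<bullet> \<theta>h - ch i)\<^sup>2 + 2 * (rh i \<bullet> \<theta>s - ch i)\<^sup>2)"
    by (rule sum_mono) (rule pt)
  also have "\<dots> = 2 * (\<Sum>i\<in>I. (rh i \<bullet> \<theta>h - ch i)\<^sup>2) + 2 * (\<Sum>i\<in>I. (rh i \<bullet> \<theta>s - ch i)\<^sup>2)"
    by (simp add: sum.distrib sum_distrib_left)
  also have "\<dots> \<le> 4 * (\<Sum>i\<in>I. (rh i \<bullet> \<theta>s - ch i)\<^sup>2)" using minim[rule_format, of \<theta>s] by linarith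
  finally show ?thesis using kpos by (simp add: field_simps)
qed

lemma coercive:
  fixes r :: "'i \<Rightarrow> 'v::euclidean_space"
  assumes fin: "finite I" and sp: "span (r ` I) = UNIV"
  shows "\<exists>\<kappa>>0. \<forall>v. \<kappa> * (norm v)\<^sup>2 \<le> (\<Sum>i\<in>I. (r i \<bullet> v)\<^sup>2)"
proof -
  let ?q = "\<lambda>v. (\<Sum>i\<in>I. (r i \<bullet> v)\<^sup>2)"
  have cont: "continuous_on (sphere 0 1) ?q"
    by (intro continuous_intros)
  have ne: "sphere (0::'v) 1 \<noteq> {}" by simp
  obtain x0 where x0: "x0 \<in> sphere 0 1" and mn: "\<forall>y\<in>sphere 0 1. ?q x0 \<le> ?q y"
    using continuous_attains_inf[OF compact_sphere ne cont] by blast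
  have pos: "?q x0 > 0"
  proof (rule ccontr)
    assume "\<not> ?q x0 > 0"
    hence "?q x0 = 0" by (smt (verit) sum_nonneg zero_le_power2)
    hence "\<forall>i\<in>I. (r i \<bullet> x0)\<^sup>2 = 0" using fin by (simp add: sum_nonneg_eq_0_iff)
    hence z: "\<forall>i\<in>I. r i \<bullet> x0 = 0" by simp
    have "orthogonal x0 x0"
      by (rule orthogonal_to_span[of x0 "r ` I"]) (use sp z in \<open>auto simp: orthogonal_def inner_commute\<close>)
    hence "x0 = 0" by (simp add: orthogonal_def)
    thus False using x0 by simp
  qed
  show ?thesis
  proof (intro exI[of _ "?q x0"] conjI allI pos)
    fix v :: 'v
    show "?q x0 * (norm v)\<^sup>2 \<le> ?q v"
    proof (cases "v = 0")
      case True thus ?thesis by simp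
    next
      case False
      let ?u = "v /\<^sub>R norm v"
      have "?u \<in> sphere 0 1" using False by simp
      hence le: "?q x0 \<le> ?q ?u" using mn by blast
      have "?q ?u = ?q v / (norm v)\<^sup>2"
        unfolding sum_divide_distrib
        by (rule sum.cong) (simp_all add: power_mult_distrib power_inverse divide_inverse mult.commute)
      have "(norm v)\<^sup>2 * ?q x0 \<le> (norm v)\<^sup>2 * ?q ?u" by (rule mult_left_mono[OF le]) simp
      also have "\<dots> = ?q v" using False unfolding \<open>?q ?u = ?q v / (norm v)\<^sup>2\<close> by simp
      finally show ?thesis by (simp add: mult.commute)
    qed
  qed
qed

lemma coercive_perturb:
  fixes r rh :: "'i \<Rightarrow> 'v::euclidean_space"
  assumes fin: "finite I" and coer: "\<forall>v. \<kappa> * (norm v)\<^sup>2 \<le> (\<Sum>i\<in>I. (r i \<bullet> v)\<^sup>2)"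
    and small: "(\<Sum>i\<in>I. (norm (rh i - r i))\<^sup>2) \<le> \<kappa> / 4"
  shows "\<forall>v. \<kappa> / 4 * (norm v)\<^sup>2 \<le> (\<Sum>i\<in>I. (rh i \<bullet> v)\<^sup>2)"
proof
  fix v :: 'v
  have pt: "(r i \<bullet> v)\<^sup>2 \<le> 2 * (rh i \<bullet> v)\<^sup>2 + 2 * ((norm (rh i - r i))\<^sup>2 * (norm v)\<^sup>2)" for i
  proof -
    have e: "r i \<bullet> v = rh i \<bullet> v - (rh i - r i) \<bullet> v" by (simp add: inner_diff_left)
    have cs: "((rh i - r i) \<bullet> v)\<^sup>2 \<le> (norm (rh i - r i))\<^sup>2 * (norm v)\<^sup>2"
      by (metis Cauchy_Schwarz_ineq power2_norm_eq_inner)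
    have "(x - y)\<^sup>2 \<le> 2 * x\<^sup>2 + 2 * y\<^sup>2" for x y :: real
      proof -
      have "0 \<le> (x + y)\<^sup>2" by simp
      thus ?thesis by (simp add: power2_eq_square algebra_simps)
    qed
    from this[of "rh i \<bullet> v" "(rh i - r i) \<bullet> v"] e cs show ?thesis by simp
  qed
  have "\<kappa> * (norm v)\<^sup>2 \<le> (\<Sum>i\<in>I. (r i \<bullet> v)\<^sup>2)" using coer by blast
  also have "\<dots> \<le> (\<Sum>i\<in>I. 2 * (rh i \<bullet> v)\<^sup>2 + 2 * ((norm (rh i - r i))\<^sup>2 * (norm v)\<^sup>2))"
    by (rule sum_mono) (rule pt)
  also have "\<dots> = 2 * (\<Sum>i\<in>I. (rh i \<bullet> v)\<^sup>2) + 2 * (\<Sum>i\<in>I. (norm (rh i - r i))\<^sup>2) * (norm v)\<^sup>2"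
    by (simp add: sum.distrib sum_distrib_left sum_distrib_right mult.assoc)
  also have "\<dots> \<le> 2 * (\<Sum>i\<in>I. (rh i \<bullet> v)\<^sup>2) + 2 * (\<kappa> / 4) * (norm v)\<^sup>2"
    using mult_right_mono[OF small, of "(norm v)\<^sup>2"] by simp
  finally show "\<kappa> / 4 * (norm v)\<^sup>2 \<le> (\<Sum>i\<in>I. (rh i \<bullet> v)\<^sup>2)" by simp
qed



definition Pw :: "'x set \<Rightarrow> ('x \<Rightarrow> real) \<Rightarrow> nat \<Rightarrow> ((nat \<Rightarrow> 'x) \<Rightarrow> bool) \<Rightarrow> real" where
  "Pw S w N E = (\<Sum>s\<in>{s \<in> {..<N} \<rightarrow>\<^sub>E S. E s}. \<Prod>k<N. w (s k))"

lemma iid_Pw: "iid_prob m n N \<mu> \<nu> E = Pw ({1..m} \<times> {1..n}) (\<lambda>x. \<mu> (fst x) * \<nu> (snd x)) N E"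
  unfolding iid_prob_def Pw_def by simp

lemma sum_PiE_prod:
  fixes g :: "'x \<Rightarrow> real"
  assumes "finite S"
  shows "(\<Sum>s\<in>{..<N} \<rightarrow>\<^sub>E S. \<Prod>k<N. g (s k)) = (\<Sum>x\<in>S. g x) ^ N"
  using prod_sum_PiE[of "{..<N}" "\<lambda>_. S" "\<lambda>_ y. g y"] assms by simp

lemma Pw_if:
  assumes "finite S"
  shows "Pw S w N E = (\<Sum>s\<in>{..<N} \<rightarrow>\<^sub>E S. if E s then (\<Prod>k<N. w (s k)) else 0)"
  unfolding Pw_def using assms by (simp add: sum.inter_filter finite_PiE)

lemma Pw_weight_nonneg:
  fixes w :: "'x \<Rightarrow> real"
  assumes "\<forall>x\<in>S. w x \<ge> 0" and "s \<in> {..<N} \<rightarrow>\<^sub>E S"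
  shows "(\<Prod>k<N. w (s k)) \<ge> 0"
proof (rule prod_nonneg)
  fix k assume "k \<in> {..<N}"
  hence "s k \<in> S" using assms(2) by (auto simp: PiE_def Pi_def)
  thus "0 \<le> w (s k)" using assms(1) by auto
qed

lemma Pw_True:
  assumes "finite S" "(\<Sum>x\<in>S. w x) = 1"
  shows "Pw S w N (\<lambda>_. True) = 1"
  unfolding Pw_def using sum_PiE_prod[OF assms(1), where N=N and g=w] assms(2) by simp

lemma Pw_compl:
  assumes "finite S"
  shows "Pw S w N E + Pw S w N (\<lambda>s. \<not> E s) = Pw S w N (\<lambda>_. True)"
  unfolding Pw_if[OF assms] by (simp add: sum.distrib[symmetric] cong: if_cong) (rule sum.cong, auto)

lemma Pw_mono:
  assumes "finite S" "\<forall>x\<in>S. w x \<ge> 0" "\<forall>s\<in>{..<N} \<rightarrow>\<^sub>E S. E s \<longrightarrow> F s"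
  shows "Pw S w N E \<le> Pw S w N F"
  unfolding Pw_if[OF assms(1)]
  by (rule sum_mono) (use assms Pw_weight_nonneg in auto)

lemma Pw_union2:
  assumes "finite S" "\<forall>x\<in>S. w x \<ge> 0"
  shows "Pw S w N (\<lambda>s. E s \<or> F s) \<le> Pw S w N E + Pw S w N F"
  unfolding Pw_if[OF assms(1)] sum.distrib[symmetric]
  by (rule sum_mono) (use assms Pw_weight_nonneg in auto)

lemma Pw_unionJ:
  assumes "finite S" "\<forall>x\<in>S. w x \<ge> 0" "finite J"
  shows "Pw S w N (\<lambda>s. \<exists>i\<in>J. E i s) \<le> (\<Sum>i\<in>J. Pw S w N (E i))"
proof -
  have "Pw S w N (\<lambda>s. \<exists>i\<in>J. E i s) \<le>
      (\<Sum>s\<in>{..<N} \<rightarrow>\<^sub>E S. \<Sum>i\<in>J. if E i s then (\<Prod>k<N. w (s k)) else 0)"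
    unfolding Pw_if[OF assms(1)]
  proof (rule sum_mono)
    fix s assume s: "s \<in> {..<N} \<rightarrow>\<^sub>E S"
    have nn: "(\<Prod>k<N. w (s k)) \<ge> 0" using Pw_weight_nonneg[OF assms(2) s] .
    show "(if \<exists>i\<in>J. E i s then \<Prod>k<N. w (s k) else 0) \<le> (\<Sum>i\<in>J. if E i s then \<Prod>k<N. w (s k) else 0)"
    proof (cases "\<exists>i\<in>J. E i s")
      case True
      then obtain i where i: "i \<in> J" "E i s" by blast
      have "(if E i s then \<Prod>k<N. w (s k) else 0) \<le> (\<Sum>i\<in>J. if E i s then \<Prod>k<N. w (s k) else 0)"
        by (rule member_le_sum) (use i nn assms(3) in auto)
      with True i show ?thesis by simp
    next
      case False thus ?thesis using nn by (simp add: sum_nonneg)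
    qed
  qed
  also have "\<dots> = (\<Sum>i\<in>J. Pw S w N (E i))"
    unfolding Pw_if[OF assms(1)] by (rule sum.swap)
  finally show ?thesis .
qed

lemma exp_le_quad:
  fixes y :: real assumes "\<bar>y\<bar> \<le> 1" shows "exp y \<le> 1 + y + y\<^sup>2"
proof (cases "y \<ge> 0")
  case True thus ?thesis using exp_bound[of y] assms by simp
next
  case False
  have a: "exp (-y) \<ge> 1 - y" using exp_ge_add_one_self[of "-y"] by simp
  have b: "exp y * exp (-y) = 1" by (simp add: exp_minus)
  have c: "(1 + y + y\<^sup>2) * (1 - y) \<ge> 1"
  proof -
    have "(1 + y + y\<^sup>2) * (1 - y) = 1 - y^3" by (simp add: power2_eq_square power3_eq_cube algebra_simps)
    moreover have "y^3 \<le> 0" using False by (simp add: odd_power_less_zero less_imp_le)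
    ultimately show ?thesis by simp
  qed
  have "exp y * (1 - y) \<le> exp y * exp (-y)" using a by (simp add: mult_left_mono)
  hence "exp y * (1 - y) \<le> (1 + y + y\<^sup>2) * (1 - y)" using b c by simp
  thus ?thesis using False by (simp add: mult_le_cancel_right)
qed

lemma mgf_bound:
  fixes w f :: "'x \<Rightarrow> real" and l :: real
  assumes "finite S" "\<forall>x\<in>S. w x \<ge> 0" "(\<Sum>x\<in>S. w x) = 1" "(\<Sum>x\<in>S. w x * f x) = 0"
    "\<forall>x\<in>S. \<bar>f x\<bar> \<le> 1" "\<bar>l\<bar> \<le> 1"
  shows "(\<Sum>x\<in>S. w x * exp (l * f x)) \<le> exp (l\<^sup>2)"
proof -
  have "(\<Sum>x\<in>S. w x * exp (l * f x)) \<le> (\<Sum>x\<in>S. w x * (1 + l * f x + l\<^sup>2))"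
  proof (rule sum_mono)
    fix x assume x: "x \<in> S"
    have af: "\<bar>l * f x\<bar> \<le> 1" using assms(5,6) x by (simp add: abs_mult mult_le_one)
    have "(l * f x)\<^sup>2 \<le> l\<^sup>2"
    proof -
      have "(l * f x)\<^sup>2 = l\<^sup>2 * (f x)\<^sup>2" by (simp add: power_mult_distrib)
      moreover have "(f x)\<^sup>2 \<le> 1" using assms(5) x by (simp add: abs_le_square_iff[symmetric] abs_square_le_1)
      ultimately show ?thesis by (simp add: mult_left_le)
    qed
    hence "exp (l * f x) \<le> 1 + l * f x + l\<^sup>2" using exp_le_quad[OF af] by simp
    thus "w x * exp (l * f x) \<le> w x * (1 + l * f x + l\<^sup>2)" using assms(2) x by (simp add: mult_left_mono)
  qed
  also have "\<dots> = (\<Sum>x\<in>S. w x) + l * (\<Sum>x\<in>S. w x * f x) + l\<^sup>2 * (\<Sum>x\<in>S. w x)"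
    by (simp add: algebra_simps sum.distrib sum_distrib_left sum_distrib_right)
  also have "\<dots> = 1 + l\<^sup>2" using assms(3,4) by simp
  also have "\<dots> \<le> exp (l\<^sup>2)" using exp_ge_add_one_self[of "l\<^sup>2"] by simp
  finally show ?thesis .
qed

lemma chernoff:
  fixes w f :: "'x \<Rightarrow> real" and t :: real
  assumes fin: "finite S" and wn: "\<forall>x\<in>S. w x \<ge> 0" and w1: "(\<Sum>x\<in>S. w x) = 1"
    and f0: "(\<Sum>x\<in>S. w x * f x) = 0" and f1: "\<forall>x\<in>S. \<bar>f x\<bar> \<le> 1" and t: "0 \<le> t" "t \<le> 2"
  shows "Pw S w N (\<lambda>s. (\<Sum>k<N. f (s k)) \<ge> N * t) \<le> exp (- (N * t\<^sup>2 / 4))"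
proof -
  define l where "l = t / 2"
  have l: "\<bar>l\<bar> \<le> 1" "l \<ge> 0" using t by (auto simp: l_def)
  have "Pw S w N (\<lambda>s. (\<Sum>k<N. f (s k)) \<ge> N * t) \<le>
      (\<Sum>s\<in>{..<N} \<rightarrow>\<^sub>E S. (\<Prod>k<N. w (s k)) * exp (l * ((\<Sum>k<N. f (s k)) - N * t)))"
    unfolding Pw_if[OF fin]
  proof (rule sum_mono)
    fix s assume s: "s \<in> {..<N} \<rightarrow>\<^sub>E S"
    have nn: "(\<Prod>k<N. w (s k)) \<ge> 0" using Pw_weight_nonneg[OF wn s] .
    show "(if (\<Sum>k<N. f (s k)) \<ge> N * t then \<Prod>k<N. w (s k) else 0) \<le> (\<Prod>k<N. w (s k)) * exp (l * ((\<Sum>k<N. f (s k)) - N * t))"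
    proof (cases "(\<Sum>k<N. f (s k)) \<ge> N * t")
      case True
      hence "exp (l * ((\<Sum>k<N. f (s k)) - N * t)) \<ge> 1" using l by simp
      thus ?thesis using True nn by (simp add: mult_le_cancel_left1)
    qed (use nn in simp)
  qed
  also have "\<dots> = exp (- (l * N * t)) * (\<Sum>s\<in>{..<N} \<rightarrow>\<^sub>E S. \<Prod>k<N. w (s k) * exp (l * f (s k)))"
    unfolding sum_distrib_left
  proof (rule sum.cong[OF refl])
    fix s
    have "exp (l * ((\<Sum>k<N. f (s k)) - N * t)) = exp (- (l * N * t)) * (\<Prod>k<N. exp (l * f (s k)))"
      by (simp add: right_diff_distrib exp_diff exp_minus sum_distrib_left exp_sum divide_inverse mult.commute)
    thus "(\<Prod>k<N. w (s k)) * exp (l * ((\<Sum>k<N. f (s k)) - N * t)) = exp (- (l * N * t)) * (\<Prod>k<N. w (s k) * exp (l * f (s k)))"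
      by (simp add: prod.distrib)
  qed
  also have "\<dots> = exp (- (l * N * t)) * (\<Sum>x\<in>S. w x * exp (l * f x)) ^ N"
    using sum_PiE_prod[OF fin, where N=N and g="\<lambda>x. w x * exp (l * f x)"] by simp
  also have "\<dots> \<le> exp (- (l * N * t)) * exp (l\<^sup>2) ^ N"
  proof -
    have "(\<Sum>x\<in>S. w x * exp (l * f x)) ^ N \<le> exp (l\<^sup>2) ^ N"
      by (rule power_mono[OF mgf_bound[OF fin wn w1 f0 f1 l(1)]]) (use wn in \<open>auto intro!: sum_nonneg\<close>)
    thus ?thesis by simp
  qed
  also have "\<dots> = exp (- (N * t\<^sup>2 / 4))"
    by (simp add: exp_of_nat_mult[symmetric] exp_add[symmetric] l_def power2_eq_square field_simps)
  finally show ?thesis .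
qed



lemma marg_fst:
  fixes \<mu> \<nu> g :: "nat \<Rightarrow> real"
  assumes "(\<Sum>b=1..n. \<nu> b) = 1"
  shows "(\<Sum>x\<in>{1..m} \<times> {1..n}. \<mu> (fst x) * \<nu> (snd x) * g (fst x)) = (\<Sum>a=1..m. \<mu> a * g a)"
proof -
  have "(\<Sum>x\<in>{1..m} \<times> {1..n}. \<mu> (fst x) * \<nu> (snd x) * g (fst x)) = (\<Sum>a=1..m. \<Sum>b=1..n. \<mu> a * \<nu> b * g a)"
    by (simp add: sum.cartesian_product split_def)
  also have "\<dots> = (\<Sum>a=1..m. \<mu> a * g a * (\<Sum>b=1..n. \<nu> b))"
    by (simp add: sum_distrib_left mult_ac)
  finally show ?thesis using assms by simp
qed

lemma marg_snd:
  fixes \<mu> \<nu> g :: "nat \<Rightarrow> real"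
  assumes "(\<Sum>a=1..m. \<mu> a) = 1"
  shows "(\<Sum>x\<in>{1..m} \<times> {1..n}. \<mu> (fst x) * \<nu> (snd x) * g (snd x)) = (\<Sum>b=1..n. \<nu> b * g b)"
proof -
  have "(\<Sum>x\<in>{1..m} \<times> {1..n}. \<mu> (fst x) * \<nu> (snd x) * g (snd x)) = (\<Sum>a=1..m. \<Sum>b=1..n. \<mu> a * \<nu> b * g b)"
    by (simp add: sum.cartesian_product split_def)
  also have "\<dots> = (\<Sum>b=1..n. \<nu> b * g b * (\<Sum>a=1..m. \<mu> a))"
    by (subst sum.swap) (simp add: sum_distrib_left mult_ac)
  finally show ?thesis using assms by simp
qed

lemma count_sum:
  "(\<Sum>k<N. (if P k then 1 else 0) - c) = real (card {k\<in>{..<N}. P k}) - real N * (c::real)"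
proof -
  have "{..<N} \<inter> Collect P = {k\<in>{..<N}. P k}" by auto
  thus ?thesis by (simp add: sum_subtractf sum.If_cases)
qed

lemma dev_bound:
  fixes w :: "'x \<Rightarrow> real" and p t :: real and N :: nat
  assumes fin: "finite S" and wn: "\<forall>x\<in>S. w x \<ge> 0" and w1: "(\<Sum>x\<in>S. w x) = 1"
    and f0: "(\<Sum>x\<in>S. w x * ((if Q x then 1 else 0) - p)) = 0" and p: "0 \<le> p" "p \<le> 1"
    and t: "0 \<le> t" "t \<le> 2" and N: "N > 0"
  shows "Pw S w N (\<lambda>s. \<bar>real (card {k\<in>{..<N}. Q (s k)}) / real N - p\<bar> > t) \<le> 2 * exp (- (N * t\<^sup>2 / 4))"
proof -
  define f where "f x = (if Q x then 1 else 0) - p" for x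
  have f1: "\<forall>x\<in>S. \<bar>f x\<bar> \<le> 1" using p by (auto simp: f_def)
  have f1': "\<forall>x\<in>S. \<bar>- f x\<bar> \<le> 1" using f1 by simp
  have f0': "(\<Sum>x\<in>S. w x * f x) = 0" using f0 by (simp add: f_def)
  have f0'': "(\<Sum>x\<in>S. w x * - f x) = 0" using f0' by (simp add: sum_negf)
  have sf: "(\<Sum>k<N. f (s k)) = real (card {k\<in>{..<N}. Q (s k)}) - real N * p" for s
    unfolding f_def by (rule count_sum)
  have "Pw S w N (\<lambda>s. \<bar>real (card {k\<in>{..<N}. Q (s k)}) / real N - p\<bar> > t) \<le>
        Pw S w N (\<lambda>s. (\<Sum>k<N. f (s k)) \<ge> N * t \<or> (\<Sum>k<N. - f (s k)) \<ge> N * t)"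
  proof (rule Pw_mono[OF fin wn], intro ballI impI)
    fix s assume h: "\<bar>real (card {k\<in>{..<N}. Q (s k)}) / real N - p\<bar> > t"
    have "real (card {k\<in>{..<N}. Q (s k)}) / real N - p = (\<Sum>k<N. f (s k)) / N"
      using N by (simp add: sf field_simps)
    hence "\<bar>(\<Sum>k<N. f (s k))\<bar> > N * t" using h N by (simp add: abs_divide field_simps)
    thus "(\<Sum>k<N. f (s k)) \<ge> N * t \<or> (\<Sum>k<N. - f (s k)) \<ge> N * t"
      by (simp add: sum_negf) linarith
  qed
  also have "\<dots> \<le> Pw S w N (\<lambda>s. (\<Sum>k<N. f (s k)) \<ge> N * t) + Pw S w N (\<lambda>s. (\<Sum>k<N. - f (s k)) \<ge> N * t)"
    by (rule Pw_union2[OF fin wn])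
  also have "\<dots> \<le> exp (- (N * t\<^sup>2 / 4)) + exp (- (N * t\<^sup>2 / 4))"
    using chernoff[OF fin wn w1 f0' f1 t, of N] chernoff[OF fin wn w1 f0'' f1' t, of N] by linarith
  finally show ?thesis by simp
qed

definition good :: "nat \<Rightarrow> nat \<Rightarrow> nat \<Rightarrow> (nat \<Rightarrow> real) \<Rightarrow> (nat \<Rightarrow> real) \<Rightarrow> real \<Rightarrow> (nat \<Rightarrow> nat \<times> nat) \<Rightarrow> bool" where
  "good m n N \<mu> \<nu> t s \<longleftrightarrow> (\<forall>a\<in>{1..m}. \<bar>freqA N s a - \<mu> a\<bar> \<le> t) \<and> (\<forall>b\<in>{1..n}. \<bar>freqB N s b - \<nu> b\<bar> \<le> t)"

lemma prob_good:
  fixes \<mu> \<nu> :: "nat \<Rightarrow> real" and t :: real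
  assumes \<mu>n: "\<forall>a\<in>{1..m}. \<mu> a \<ge> 0" and \<mu>1: "(\<Sum>a=1..m. \<mu> a) = 1"
    and \<nu>n: "\<forall>b\<in>{1..n}. \<nu> b \<ge> 0" and \<nu>1: "(\<Sum>b=1..n. \<nu> b) = 1"
    and t: "0 \<le> t" "t \<le> 2" and N: "N > 0"
  shows "iid_prob m n N \<mu> \<nu> (good m n N \<mu> \<nu> t) \<ge> 1 - 2 * real (m + n) * exp (- (N * t\<^sup>2 / 4))"
proof -
  let ?S = "{1..m} \<times> {1..n}"
  let ?w = "\<lambda>x. \<mu> (fst x) * \<nu> (snd x)"
  let ?e = "exp (- (N * t\<^sup>2 / 4))"
  have fin: "finite ?S" by simp
  have wn: "\<forall>x\<in>?S. ?w x \<ge> 0" using \<mu>n \<nu>n by auto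
  have w1: "(\<Sum>x\<in>?S. ?w x) = 1"
    using marg_fst[OF \<nu>1, where \<mu>=\<mu> and m=m and g="\<lambda>_. 1"] \<mu>1 by simp
  have \<mu>le: "\<mu> a \<le> 1" if "a \<in> {1..m}" for a
    using member_le_sum[of a "{1..m}" \<mu>] that \<mu>n \<mu>1 by simp
  have \<nu>le: "\<nu> b \<le> 1" if "b \<in> {1..n}" for b
    using member_le_sum[of b "{1..n}" \<nu>] that \<nu>n \<nu>1 by simp
  have da: "Pw ?S ?w N (\<lambda>s. \<bar>freqA N s a - \<mu> a\<bar> > t) \<le> 2 * ?e" if a: "a \<in> {1..m}" for a
  proof -
    have f0: "(\<Sum>x\<in>?S. ?w x * ((if fst x = a then 1 else 0) - \<mu> a)) = 0"
    proof -
      have e1: "(\<Sum>i=1..m. \<mu> i * ((if i = a then 1 else 0) - \<mu> a)) = (\<Sum>i=1..m. (if i = a then \<mu> i else 0)) - \<mu> a * (\<Sum>i=1..m. \<mu> i)"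
        unfolding sum_distrib_left sum_subtractf[symmetric]
        by (rule sum.cong) (simp_all add: algebra_simps)
      have e2: "(\<Sum>i=1..m. (if i = a then \<mu> i else 0)) = \<mu> a" using a by (simp add: sum.delta')
      show ?thesis using marg_fst[OF \<nu>1, where \<mu>=\<mu> and m=m and g="\<lambda>i. (if i = a then 1 else 0) - \<mu> a"] e1 e2 \<mu>1
        by (simp add: mult.assoc)
    qed
    show ?thesis unfolding freqA_def
      using dev_bound[OF fin wn w1 f0 \<mu>n[rule_format, OF a] \<mu>le[OF a] t N] by simp
  qed
  have db: "Pw ?S ?w N (\<lambda>s. \<bar>freqB N s b - \<nu> b\<bar> > t) \<le> 2 * ?e" if b: "b \<in> {1..n}" for b
  proof -
    have f0: "(\<Sum>x\<in>?S. ?w x * ((if snd x = b then 1 else 0) - \<nu> b)) = 0"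
    proof -
      have e1: "(\<Sum>i=1..n. \<nu> i * ((if i = b then 1 else 0) - \<nu> b)) = (\<Sum>i=1..n. (if i = b then \<nu> i else 0)) - \<nu> b * (\<Sum>i=1..n. \<nu> i)"
        unfolding sum_distrib_left sum_subtractf[symmetric]
        by (rule sum.cong) (simp_all add: algebra_simps)
      have e2: "(\<Sum>i=1..n. (if i = b then \<nu> i else 0)) = \<nu> b" using b by (simp add: sum.delta')
      show ?thesis using marg_snd[OF \<mu>1, where \<nu>=\<nu> and n=n and g="\<lambda>i. (if i = b then 1 else 0) - \<nu> b"] e1 e2 \<nu>1
        by (simp add: mult.assoc)
    qed
    show ?thesis unfolding freqB_def
      using dev_bound[OF fin wn w1 f0 \<nu>n[rule_format, OF b] \<nu>le[OF b] t N] by simp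
  qed
  have "Pw ?S ?w N (\<lambda>s. \<not> good m n N \<mu> \<nu> t s) \<le>
      Pw ?S ?w N (\<lambda>s. (\<exists>a\<in>{1..m}. \<bar>freqA N s a - \<mu> a\<bar> > t) \<or> (\<exists>b\<in>{1..n}. \<bar>freqB N s b - \<nu> b\<bar> > t))"
    by (rule Pw_mono[OF fin wn]) (auto simp: good_def not_le)
  also have "\<dots> \<le> Pw ?S ?w N (\<lambda>s. \<exists>a\<in>{1..m}. \<bar>freqA N s a - \<mu> a\<bar> > t) + Pw ?S ?w N (\<lambda>s. \<exists>b\<in>{1..n}. \<bar>freqB N s b - \<nu> b\<bar> > t)"
    by (rule Pw_union2[OF fin wn])
  also have "\<dots> \<le> (\<Sum>a=1..m. Pw ?S ?w N (\<lambda>s. \<bar>freqA N s a - \<mu> a\<bar> > t)) + (\<Sum>b=1..n. Pw ?S ?w N (\<lambda>s. \<bar>freqB N s b - \<nu> b\<bar> > t))"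
    by (intro add_mono Pw_unionJ[OF fin wn]) auto
  also have "\<dots> \<le> (\<Sum>a=1..m. 2 * ?e) + (\<Sum>b=1..n. 2 * ?e)"
    by (intro add_mono sum_mono da db) auto
  also have "\<dots> = 2 * real (m + n) * ?e" by (simp add: algebra_simps)
  finally have bad: "Pw ?S ?w N (\<lambda>s. \<not> good m n N \<mu> \<nu> t s) \<le> 2 * real (m + n) * ?e" .
  have "Pw ?S ?w N (good m n N \<mu> \<nu> t) + Pw ?S ?w N (\<lambda>s. \<not> good m n N \<mu> \<nu> t s) = 1"
    using Pw_compl[OF fin, of ?w N "good m n N \<mu> \<nu> t"] Pw_True[OF fin w1] by simp
  with bad show ?thesis unfolding iid_Pw by linarith
qed



lemma qre_pos:
  assumes "is_QRE m n \<eta> Q \<mu> \<nu>" "m \<ge> 1" "n \<ge> 1"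
  shows "\<forall>a\<in>{1..m}. \<mu> a > 0" "(\<Sum>a=1..m. \<mu> a) = 1"
    "\<forall>b\<in>{1..n}. \<nu> b > 0" "(\<Sum>b=1..n. \<nu> b) = 1"
proof -
  let ?ZA = "(\<Sum>a'=1..m. exp (\<eta> * (\<Sum>b=1..n. Q a' b * \<nu> b)))"
  let ?ZB = "(\<Sum>b'=1..n. exp (- \<eta> * (\<Sum>a=1..m. Q a b' * \<mu> a)))"
  have ZA: "?ZA > 0" using assms(2) by (intro sum_pos) auto
  have ZB: "?ZB > 0" using assms(3) by (intro sum_pos) auto
  have hA: "\<forall>a\<in>{1..m}. \<mu> a = exp (\<eta> * (\<Sum>b=1..n. Q a b * \<nu> b)) / ?ZA"
    and hB: "\<forall>b\<in>{1..n}. \<nu> b = exp (- \<eta> * (\<Sum>a=1..m. Q a b * \<mu> a)) / ?ZB"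
    using assms(1) unfolding is_QRE_def by blast+
  show "\<forall>a\<in>{1..m}. \<mu> a > 0" using hA ZA by simp
  show "\<forall>b\<in>{1..n}. \<nu> b > 0" using hB ZB by simp
  have "(\<Sum>a=1..m. \<mu> a) = (\<Sum>a=1..m. exp (\<eta> * (\<Sum>b=1..n. Q a b * \<nu> b)) / ?ZA)"
    using hA by (intro sum.cong) auto
  also have "\<dots> = 1" using ZA by (simp add: sum_divide_distrib[symmetric])
  finally show "(\<Sum>a=1..m. \<mu> a) = 1" .
  have "(\<Sum>b=1..n. \<nu> b) = (\<Sum>b=1..n. exp (- \<eta> * (\<Sum>a=1..m. Q a b * \<mu> a)) / ?ZB)"
    using hB by (intro sum.cong) auto
  also have "\<dots> = 1" using ZB by (simp add: sum_divide_distrib[symmetric])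
  finally show "(\<Sum>b=1..n. \<nu> b) = 1" .
qed

lemma qre_rows:
  assumes q: "is_QRE m n \<eta> (linQ \<phi> \<theta>) \<mu> \<nu>" and "m \<ge> 1" "n \<ge> 1" "\<eta> > 0"
  shows "\<forall>a\<in>{2..m}. rowA n \<phi> \<nu> a \<bullet> \<theta> = vec_c \<eta> \<mu> a"
    "\<forall>b\<in>{2..n}. rowB m \<phi> \<mu> b \<bullet> \<theta> = vec_d \<eta> \<nu> b"
proof -
  let ?Q = "linQ \<phi> \<theta>"
  let ?X = "\<lambda>a. (\<Sum>b=1..n. ?Q a b * \<nu> b)"
  let ?Y = "\<lambda>b. (\<Sum>a=1..m. ?Q a b * \<mu> a)"
  let ?ZA = "(\<Sum>a'=1..m. exp (\<eta> * ?X a'))"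
  let ?ZB = "(\<Sum>b'=1..n. exp (- \<eta> * ?Y b'))"
  have ZA: "?ZA > 0" using assms(2) by (intro sum_pos) auto
  have ZB: "?ZB > 0" using assms(3) by (intro sum_pos) auto
  have hA: "\<forall>a\<in>{1..m}. \<mu> a = exp (\<eta> * ?X a) / ?ZA"
    and hB: "\<forall>b\<in>{1..n}. \<nu> b = exp (- \<eta> * ?Y b) / ?ZB"
    using q unfolding is_QRE_def by blast+
  show "\<forall>a\<in>{2..m}. rowA n \<phi> \<nu> a \<bullet> \<theta> = vec_c \<eta> \<mu> a"
  proof
    fix a assume a: "a \<in> {2..m}"
    have r: "\<mu> a / \<mu> 1 = exp (\<eta> * ?X a) / exp (\<eta> * ?X 1)"
      using hA a assms(2) ZA by auto
    have l: "ln (exp (\<eta> * ?X a) / exp (\<eta> * ?X 1)) = \<eta> * (?X a - ?X 1)"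
      by (simp add: exp_diff[symmetric] right_diff_distrib)
    have "vec_c \<eta> \<mu> a = ?X a - ?X 1"
      unfolding vec_c_def r l using assms(4) by simp
    also have "\<dots> = rowA n \<phi> \<nu> a \<bullet> \<theta>"
      unfolding rowA_def linQ_def inner_sum_left sum_subtractf[symmetric]
      by (rule sum.cong) (simp_all add: inner_diff_left algebra_simps)
    finally show "rowA n \<phi> \<nu> a \<bullet> \<theta> = vec_c \<eta> \<mu> a" by simp
  qed
  show "\<forall>b\<in>{2..n}. rowB m \<phi> \<mu> b \<bullet> \<theta> = vec_d \<eta> \<nu> b"
  proof
    fix b assume b: "b \<in> {2..n}"
    have r: "\<nu> b / \<nu> 1 = exp (- \<eta> * ?Y b) / exp (- \<eta> * ?Y 1)"
      using hB b assms(3) ZB by auto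
    have l: "ln (exp (- \<eta> * ?Y b) / exp (- \<eta> * ?Y 1)) = - (\<eta> * (?Y b - ?Y 1))"
      by (simp add: exp_diff[symmetric] right_diff_distrib)
    have "vec_d \<eta> \<nu> b = ?Y b - ?Y 1"
      unfolding vec_d_def r l using assms(4) by simp
    also have "\<dots> = rowB m \<phi> \<mu> b \<bullet> \<theta>"
      unfolding rowB_def linQ_def inner_sum_left sum_subtractf[symmetric]
      by (rule sum.cong) (simp_all add: inner_diff_left algebra_simps)
    finally show "rowB m \<phi> \<mu> b \<bullet> \<theta> = vec_d \<eta> \<nu> b" by simp
  qed
qed

definition RR :: "nat \<Rightarrow> nat \<Rightarrow> (nat \<Rightarrow> nat \<Rightarrow> 'v::real_vector) \<Rightarrow> (nat \<Rightarrow> real) \<Rightarrow> (nat \<Rightarrow> real) \<Rightarrow> nat + nat \<Rightarrow> 'v" where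
  "RR m n \<phi> \<mu> \<nu> = case_sum (rowA n \<phi> \<nu>) (rowB m \<phi> \<mu>)"
definition CC :: "real \<Rightarrow> (nat \<Rightarrow> real) \<Rightarrow> (nat \<Rightarrow> real) \<Rightarrow> nat + nat \<Rightarrow> real" where
  "CC \<eta> \<mu> \<nu> = case_sum (vec_c \<eta> \<mu>) (vec_d \<eta> \<nu>)"

lemma ls_Plus:
  "ls_obj m n \<eta> \<phi> \<mu> \<nu> \<theta> = (\<Sum>i\<in>{2..m} <+> {2..n}. (RR m n \<phi> \<mu> \<nu> i \<bullet> \<theta> - CC \<eta> \<mu> \<nu> i)\<^sup>2)"
  unfolding ls_obj_def by (simp add: sum.Plus RR_def CC_def comp_def)

lemma RR_image: "RR m n \<phi> \<mu> \<nu> ` ({2..m} <+> {2..n}) = rowA n \<phi> \<nu> ` {2..m} \<union> rowB m \<phi> \<mu> ` {2..n}"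
  unfolding RR_def by (auto simp: Plus_def image_Un image_image)

lemma row_diffA:
  assumes "\<forall>b\<in>{1..n}. \<bar>\<nu>' b - \<nu> b\<bar> \<le> t"
  shows "norm (rowA n \<phi> \<nu>' a - rowA n \<phi> \<nu> a) \<le> t * (\<Sum>b=1..n. norm (\<phi> a b - \<phi> 1 b))"
proof -
  have "rowA n \<phi> \<nu>' a - rowA n \<phi> \<nu> a = (\<Sum>b=1..n. (\<nu>' b - \<nu> b) *\<^sub>R (\<phi> a b - \<phi> 1 b))"
    unfolding rowA_def by (simp add: sum_subtractf[symmetric] scaleR_diff_left)
  also have "norm \<dots> \<le> (\<Sum>b=1..n. norm ((\<nu>' b - \<nu> b) *\<^sub>R (\<phi> a b - \<phi> 1 b)))" by (rule norm_sum)
  also have "\<dots> \<le> (\<Sum>b=1..n. t * norm (\<phi> a b - \<phi> 1 b))"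
    using assms by (intro sum_mono) (auto intro!: mult_right_mono)
  finally show ?thesis by (simp add: sum_distrib_left)
qed

lemma row_diffB:
  assumes "\<forall>a\<in>{1..m}. \<bar>\<mu>' a - \<mu> a\<bar> \<le> t"
  shows "norm (rowB m \<phi> \<mu>' b - rowB m \<phi> \<mu> b) \<le> t * (\<Sum>a=1..m. norm (\<phi> a b - \<phi> a 1))"
proof -
  have "rowB m \<phi> \<mu>' b - rowB m \<phi> \<mu> b = (\<Sum>a=1..m. (\<mu>' a - \<mu> a) *\<^sub>R (\<phi> a b - \<phi> a 1))"
    unfolding rowB_def by (simp add: sum_subtractf[symmetric] scaleR_diff_left)
  also have "norm \<dots> \<le> (\<Sum>a=1..m. norm ((\<mu>' a - \<mu> a) *\<^sub>R (\<phi> a b - \<phi> a 1)))" by (rule norm_sum)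
  also have "\<dots> \<le> (\<Sum>a=1..m. t * norm (\<phi> a b - \<phi> a 1))"
    using assms by (intro sum_mono) (auto intro!: mult_right_mono)
  finally show ?thesis by (simp add: sum_distrib_left)
qed

lemma ln_lip:
  fixes x y p t :: real
  assumes "p > 0" "x \<ge> p / 2" "y \<ge> p / 2" "\<bar>x - y\<bar> \<le> t"
  shows "\<bar>ln x - ln y\<bar> \<le> 2 * t / p"
proof -
  have one: "ln u - ln v \<le> 2 * t / p" if "u \<ge> p/2" "v \<ge> p/2" "\<bar>u - v\<bar> \<le> t" for u v :: real
  proof -
    have vp: "v > 0" "u > 0" using that assms(1) by linarith+
    have "ln u - ln v = ln (u / v)" using vp by (simp add: ln_div)
    also have "\<dots> \<le> u / v - 1" using vp by (intro ln_le_minus_one) simp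
    also have "\<dots> = (u - v) / v" using vp by (simp add: field_simps)
    also have "\<dots> \<le> t / v" using vp that by (intro divide_right_mono) auto
    also have "\<dots> \<le> t / (p / 2)" using vp that assms(1)
      by (intro divide_left_mono) (auto intro: order_trans[OF abs_ge_zero])
    finally show ?thesis by (simp add: mult.commute)
  qed
  show ?thesis using one[of x y] one[of y x] assms by (auto simp: abs_minus_commute)
qed



lemma sq_diff_le: "((x::real) - y)\<^sup>2 \<le> 2 * x\<^sup>2 + 2 * y\<^sup>2"
proof -
  have "0 \<le> (x + y)\<^sup>2" by simp
  thus ?thesis by (simp add: power2_eq_square algebra_simps)
qed

lemma cancel_aux: "(X::real) \<noteq> 0 \<Longrightarrow> Y \<noteq> 0 \<Longrightarrow> X * (k / (4 * X * Y) * Y) = k / 4"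
  by (simp add: field_simps)

lemma det:
  fixes \<phi> :: "nat \<Rightarrow> nat \<Rightarrow> 'v::euclidean_space" and \<mu>s \<nu>s :: "nat \<Rightarrow> real"
  assumes m: "m \<ge> 2" and n: "n \<ge> 2" and eta: "\<eta> > 0"
    and rank: "stacked_rank m n \<phi> \<mu>s \<nu>s = DIM('v)"
    and q0: "is_QRE m n \<eta> (linQ \<phi> \<theta>0) \<mu>s \<nu>s"
  shows "\<exists>K \<epsilon>0. K \<ge> 0 \<and> \<epsilon>0 > 0 \<and> \<epsilon>0 \<le> 1 \<and> (\<forall>\<theta>s. is_QRE m n \<eta> (linQ \<phi> \<theta>s) \<mu>s \<nu>s \<longrightarrow>
     (\<forall>\<mu>h \<nu>h t. 0 \<le> t \<and> t \<le> \<epsilon>0 \<and> (\<forall>a\<in>{1..m}. \<bar>\<mu>h a - \<mu>s a\<bar> \<le> t) \<and> (\<forall>b\<in>{1..n}. \<bar>\<nu>h b - \<nu>s b\<bar> \<le> t) \<longrightarrow>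
        (\<forall>a\<in>{1..m}. \<mu>h a > 0) \<and> (\<forall>b\<in>{1..n}. \<nu>h b > 0) \<and>
        (\<forall>\<theta>h. (\<forall>\<theta>. ls_obj m n \<eta> \<phi> \<mu>h \<nu>h \<theta>h \<le> ls_obj m n \<eta> \<phi> \<mu>h \<nu>h \<theta>) \<longrightarrow>
            frob_dist2 m n (linQ \<phi> \<theta>h) (linQ \<phi> \<theta>s) \<le> K * t\<^sup>2)))"
proof -
  define I where "I = {2..m} <+> {2..n}"
  have finI: "finite I" by (simp add: I_def)
  have cardI: "real (card I) \<le> real (m + n)" by (simp add: I_def card_Plus)
  define r where "r = RR m n \<phi> \<mu>s \<nu>s"
  define c where "c = CC \<eta> \<mu>s \<nu>s"
  have sp: "span (r ` I) = UNIV"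
  proof -
    have "span (span (rowA n \<phi> \<nu>s ` {2..m} \<union> rowB m \<phi> \<mu>s ` {2..n})) = UNIV"
      by (rule iffD1[OF dim_eq_full]) (use rank in \<open>simp add: stacked_rank_def\<close>)
    thus ?thesis unfolding r_def I_def RR_image span_span .
  qed
  obtain \<kappa>0 where k0: "\<kappa>0 > 0" and coer0: "\<forall>v. \<kappa>0 * (norm v)\<^sup>2 \<le> (\<Sum>i\<in>I. (r i \<bullet> v)\<^sup>2)"
    using coercive[OF finI sp] by blast
  have m1: "m \<ge> 1" and n1: "n \<ge> 1" using m n by auto
  note pos = qre_pos[OF q0 m1 n1]
  define pmin where "pmin = Min (\<mu>s ` {1..m} \<union> \<nu>s ` {1..n})"
  have pmin_pos: "pmin > 0" unfolding pmin_def
  proof (subst Min_gr_iff)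
    show "finite (\<mu>s ` {1..m} \<union> \<nu>s ` {1..n})" by simp
    show "\<mu>s ` {1..m} \<union> \<nu>s ` {1..n} \<noteq> {}" using m1 by simp
    show "\<forall>x\<in>\<mu>s ` {1..m} \<union> \<nu>s ` {1..n}. 0 < x" using pos(1,3) by blast
  qed
  have pmin_le\<mu>: "pmin \<le> \<mu>s a" if "a \<in> {1..m}" for a unfolding pmin_def using that by (intro Min_le) auto
  have pmin_le\<nu>: "pmin \<le> \<nu>s b" if "b \<in> {1..n}" for b unfolding pmin_def using that by (intro Min_le) auto
  define B\<theta> where "B\<theta> = (\<Sum>i\<in>I. (c i)\<^sup>2) / \<kappa>0"
  define D where "D = (\<Sum>a=1..m. \<Sum>b=1..n. norm (\<phi> a b - \<phi> 1 b) + norm (\<phi> a b - \<phi> a 1))"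
  have D0: "D \<ge> 0" unfolding D_def by (intro sum_nonneg) auto
  define \<Phi> where "\<Phi> = (\<Sum>a=1..m. \<Sum>b=1..n. (norm (\<phi> a b))\<^sup>2)"
  have \<Phi>0: "\<Phi> \<ge> 0" unfolding \<Phi>_def by (intro sum_nonneg) auto
  define E0 where "E0 = 2 * D\<^sup>2 * B\<theta> + 2 * (4 / (\<eta> * pmin))\<^sup>2"
  have B0: "B\<theta> \<ge> 0" unfolding B\<theta>_def using k0 by (intro divide_nonneg_pos sum_nonneg) auto
  have E00: "E0 \<ge> 0" unfolding E0_def using B0 by simp
  define K where "K = \<Phi> * (16 / \<kappa>0) * (real (m + n) * E0)"
  define \<epsilon>0 where "\<epsilon>0 = min 1 (min (pmin / 2) (\<kappa>0 / (4 * real (m + n) * (D\<^sup>2 + 1))))"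
  have K0: "K \<ge> 0" unfolding K_def using \<Phi>0 k0 E00 by simp
  have D1: "D\<^sup>2 + 1 > 0" using zero_le_power2[of D] by linarith
  have den: "4 * real (m + n) * (D\<^sup>2 + 1) > 0" using m D1 by simp
  have e0: "\<epsilon>0 > 0" "\<epsilon>0 \<le> 1" unfolding \<epsilon>0_def using pmin_pos k0 den by simp_all
  have DA: "(\<Sum>b=1..n. norm (\<phi> a b - \<phi> 1 b)) \<le> D" if "a \<in> {1..m}" for a
  proof -
    have "(\<Sum>b=1..n. norm (\<phi> a b - \<phi> 1 b)) \<le> (\<Sum>b=1..n. norm (\<phi> a b - \<phi> 1 b) + norm (\<phi> a b - \<phi> a 1))"
      by (intro sum_mono) auto
    also have "\<dots> \<le> D" unfolding D_def
      by (rule member_le_sum[of a "{1..m}" "\<lambda>a. \<Sum>b=1..n. norm (\<phi> a b - \<phi> 1 b) + norm (\<phi> a b - \<phi> a 1)"])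
         (use that in \<open>auto intro!: sum_nonneg\<close>)
    finally show ?thesis .
  qed
  have DB: "(\<Sum>a=1..m. norm (\<phi> a b - \<phi> a 1)) \<le> D" if "b \<in> {1..n}" for b
  proof -
    have "(\<Sum>a=1..m. norm (\<phi> a b - \<phi> a 1)) \<le> (\<Sum>a=1..m. norm (\<phi> a b - \<phi> 1 b) + norm (\<phi> a b - \<phi> a 1))"
      by (intro sum_mono) auto
    also have "\<dots> \<le> (\<Sum>a=1..m. \<Sum>b=1..n. norm (\<phi> a b - \<phi> 1 b) + norm (\<phi> a b - \<phi> a 1))"
      by (intro sum_mono member_le_sum[of b "{1..n}"]) (use that in auto)
    finally show ?thesis unfolding D_def .
  qed
  have main: "(\<forall>a\<in>{1..m}. \<mu>h a > 0) \<and> (\<forall>b\<in>{1..n}. \<nu>h b > 0) \<and>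
        (\<forall>\<theta>h. (\<forall>\<theta>. ls_obj m n \<eta> \<phi> \<mu>h \<nu>h \<theta>h \<le> ls_obj m n \<eta> \<phi> \<mu>h \<nu>h \<theta>) \<longrightarrow>
            frob_dist2 m n (linQ \<phi> \<theta>h) (linQ \<phi> \<theta>s) \<le> K * t\<^sup>2)"
    if qs: "is_QRE m n \<eta> (linQ \<phi> \<theta>s) \<mu>s \<nu>s"
    and H: "0 \<le> t \<and> t \<le> \<epsilon>0 \<and> (\<forall>a\<in>{1..m}. \<bar>\<mu>h a - \<mu>s a\<bar> \<le> t) \<and> (\<forall>b\<in>{1..n}. \<bar>\<nu>h b - \<nu>s b\<bar> \<le> t)"
    for \<theta>s \<mu>h \<nu>h t
  proof (intro conjI allI impI)
    from H have t0: "0 \<le> t" and te: "t \<le> \<epsilon>0" and d\<mu>: "\<forall>a\<in>{1..m}. \<bar>\<mu>h a - \<mu>s a\<bar> \<le> t"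
      and d\<nu>: "\<forall>b\<in>{1..n}. \<bar>\<nu>h b - \<nu>s b\<bar> \<le> t" by auto
    have t1: "t \<le> 1" and tp: "t \<le> pmin / 2" and tk: "t \<le> \<kappa>0 / (4 * real (m + n) * (D\<^sup>2 + 1))"
      using te unfolding \<epsilon>0_def by auto
    have \<mu>h_ge: "\<mu>h a \<ge> pmin / 2" if "a \<in> {1..m}" for a
      using d\<mu> that pmin_le\<mu>[OF that] tp by force
    have \<nu>h_ge: "\<nu>h b \<ge> pmin / 2" if "b \<in> {1..n}" for b
      using d\<nu> that pmin_le\<nu>[OF that] tp by force
    show "\<forall>a\<in>{1..m}. \<mu>h a > 0" using \<mu>h_ge pmin_pos by (meson half_gt_zero order_less_le_trans)
    show "\<forall>b\<in>{1..n}. \<nu>h b > 0" using \<nu>h_ge pmin_pos by (meson half_gt_zero order_less_le_trans)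
    fix \<theta>h assume minim: "\<forall>\<theta>. ls_obj m n \<eta> \<phi> \<mu>h \<nu>h \<theta>h \<le> ls_obj m n \<eta> \<phi> \<mu>h \<nu>h \<theta>"
    note rows = qre_rows[OF qs m1 n1 eta]
    have exact: "\<forall>i\<in>I. r i \<bullet> \<theta>s = c i"
      using rows unfolding I_def r_def c_def RR_def CC_def by auto
    have th_bd: "(norm \<theta>s)\<^sup>2 \<le> B\<theta>"
    proof -
      have "\<kappa>0 * (norm \<theta>s)\<^sup>2 \<le> (\<Sum>i\<in>I. (r i \<bullet> \<theta>s)\<^sup>2)" using coer0 by blast
      also have "\<dots> = (\<Sum>i\<in>I. (c i)\<^sup>2)" using exact by (intro sum.cong) auto
      finally show ?thesis unfolding B\<theta>_def using k0 by (simp add: field_simps)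
    qed
    define rh where "rh = RR m n \<phi> \<mu>h \<nu>h"
    define ch where "ch = CC \<eta> \<mu>h \<nu>h"
    have rdiff: "norm (rh i - r i) \<le> t * D" if "i \<in> I" for i
    proof (cases i)
      case (Inl a)
      hence a: "a \<in> {1..m}" using that by (auto simp: I_def)
      have "norm (rh i - r i) \<le> t * (\<Sum>b=1..n. norm (\<phi> a b - \<phi> 1 b))"
        unfolding rh_def r_def RR_def Inl using row_diffA[OF d\<nu>] by simp
      also have "\<dots> \<le> t * D" using DA[OF a] t0 by (simp add: mult_left_mono)
      finally show ?thesis .
    next
      case (Inr b)
      hence b: "b \<in> {1..n}" using that by (auto simp: I_def)
      have "norm (rh i - r i) \<le> t * (\<Sum>a=1..m. norm (\<phi> a b - \<phi> a 1))"
        unfolding rh_def r_def RR_def Inr using row_diffB[OF d\<mu>] by simp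
      also have "\<dots> \<le> t * D" using DB[OF b] t0 by (simp add: mult_left_mono)
      finally show ?thesis .
    qed
    have rdiff2: "(norm (rh i - r i))\<^sup>2 \<le> t\<^sup>2 * D\<^sup>2" if "i \<in> I" for i
      using power_mono[OF rdiff[OF that], of 2] by (simp add: power_mult_distrib)
    have small: "(\<Sum>i\<in>I. (norm (rh i - r i))\<^sup>2) \<le> \<kappa>0 / 4"
    proof -
      have "(\<Sum>i\<in>I. (norm (rh i - r i))\<^sup>2) \<le> real (card I) * (t\<^sup>2 * D\<^sup>2)"
        using sum_bounded_above[of I "\<lambda>i. (norm (rh i - r i))\<^sup>2" "t\<^sup>2 * D\<^sup>2"] rdiff2 by simp
      also have "\<dots> \<le> real (m + n) * (t * D\<^sup>2)"
      proof (rule mult_mono[OF cardI])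
        have "t\<^sup>2 \<le> t" using t0 t1 by (simp add: power2_eq_square mult_le_cancel_right1 mult_left_le)
        thus "t\<^sup>2 * D\<^sup>2 \<le> t * D\<^sup>2" by (simp add: mult_right_mono)
      qed (use t0 in auto)
      also have "\<dots> \<le> real (m + n) * (\<kappa>0 / (4 * real (m + n) * (D\<^sup>2 + 1)) * (D\<^sup>2 + 1))"
        using tk t0 D1 by (intro mult_left_mono mult_mono) (simp | linarith)+
      also have "\<dots> = \<kappa>0 / 4" using m D1 by (intro cancel_aux) auto
      finally show ?thesis .
    qed
    have coer: "\<forall>v. \<kappa>0 / 4 * (norm v)\<^sup>2 \<le> (\<Sum>i\<in>I. (rh i \<bullet> v)\<^sup>2)"
      by (rule coercive_perturb[OF finI coer0 small])
    have cdiff: "\<bar>ch i - c i\<bar> \<le> 4 * t / (\<eta> * pmin)" if "i \<in> I" for i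
    proof (cases i)
      case (Inl a)
      hence a: "a \<in> {1..m}" using that by (auto simp: I_def)
      have one: "1 \<in> {1..m}" using m by auto
      have hp: "pmin / 2 > 0" using pmin_pos by simp
      have pa: "\<mu>h a > 0" "\<mu>s a > 0" "\<mu>h 1 > 0" "\<mu>s 1 > 0"
        using \<mu>h_ge[OF a] \<mu>h_ge[OF one] hp apply linarith
        using pos(1) a apply blast
        using \<mu>h_ge[OF a] \<mu>h_ge[OF one] hp apply linarith
        using pos(1) one by blast
      have "ch i - c i = ((ln (\<mu>h a) - ln (\<mu>s a)) - (ln (\<mu>h 1) - ln (\<mu>s 1))) / \<eta>"
        unfolding ch_def c_def CC_def Inl using pa by (simp add: vec_c_def ln_div diff_divide_distrib)
      moreover have hx: "\<bar>ln (\<mu>h a) - ln (\<mu>s a)\<bar> \<le> 2 * t / pmin"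
        by (rule ln_lip[OF pmin_pos \<mu>h_ge[OF a]]) (use pmin_le\<mu>[OF a] pmin_pos d\<mu> a in auto)
      moreover have hy: "\<bar>ln (\<mu>h 1) - ln (\<mu>s 1)\<bar> \<le> 2 * t / pmin"
        by (rule ln_lip[OF pmin_pos \<mu>h_ge[OF one]]) (use pmin_le\<mu>[OF one] pmin_pos d\<mu> one in auto)
      ultimately have "\<bar>ch i - c i\<bar> \<le> (2 * t / pmin + 2 * t / pmin) / \<eta>"
      proof -
        assume eq: "ch i - c i = ((ln (\<mu>h a) - ln (\<mu>s a)) - (ln (\<mu>h 1) - ln (\<mu>s 1))) / \<eta>"
        have tri: "\<bar>(ln (\<mu>h a) - ln (\<mu>s a)) - (ln (\<mu>h 1) - ln (\<mu>s 1))\<bar> \<le> 2 * t / pmin + 2 * t / pmin"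
          using hx hy abs_triangle_ineq4[of "ln (\<mu>h a) - ln (\<mu>s a)" "ln (\<mu>h 1) - ln (\<mu>s 1)"] by linarith
        have "\<bar>ch i - c i\<bar> = \<bar>(ln (\<mu>h a) - ln (\<mu>s a)) - (ln (\<mu>h 1) - ln (\<mu>s 1))\<bar> / \<eta>"
          unfolding eq using eta by (simp add: abs_divide)
        also have "\<dots> \<le> (2 * t / pmin + 2 * t / pmin) / \<eta>" using tri eta by (intro divide_right_mono) auto
        finally show ?thesis .
      qed
      also have "\<dots> = 4 * t / (\<eta> * pmin)" by simp
      finally show ?thesis .
    next
      case (Inr b)
      hence b: "b \<in> {1..n}" using that by (auto simp: I_def)
      have one: "1 \<in> {1..n}" using n by auto
      have hp: "pmin / 2 > 0" using pmin_pos by simp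
      have pa: "\<nu>h b > 0" "\<nu>s b > 0" "\<nu>h 1 > 0" "\<nu>s 1 > 0"
        using \<nu>h_ge[OF b] \<nu>h_ge[OF one] hp apply linarith
        using pos(3) b apply blast
        using \<nu>h_ge[OF b] \<nu>h_ge[OF one] hp apply linarith
        using pos(3) one by blast
      have "ch i - c i = - (((ln (\<nu>h b) - ln (\<nu>s b)) - (ln (\<nu>h 1) - ln (\<nu>s 1))) / \<eta>)"
        unfolding ch_def c_def CC_def Inr using pa by (simp add: vec_d_def ln_div diff_divide_distrib)
      moreover have hx: "\<bar>ln (\<nu>h b) - ln (\<nu>s b)\<bar> \<le> 2 * t / pmin"
        by (rule ln_lip[OF pmin_pos \<nu>h_ge[OF b]]) (use pmin_le\<nu>[OF b] pmin_pos d\<nu> b in auto)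
      moreover have hy: "\<bar>ln (\<nu>h 1) - ln (\<nu>s 1)\<bar> \<le> 2 * t / pmin"
        by (rule ln_lip[OF pmin_pos \<nu>h_ge[OF one]]) (use pmin_le\<nu>[OF one] pmin_pos d\<nu> one in auto)
      ultimately have "\<bar>ch i - c i\<bar> \<le> (2 * t / pmin + 2 * t / pmin) / \<eta>"
      proof -
        assume eq: "ch i - c i = - (((ln (\<nu>h b) - ln (\<nu>s b)) - (ln (\<nu>h 1) - ln (\<nu>s 1))) / \<eta>)"
        have tri: "\<bar>(ln (\<nu>h b) - ln (\<nu>s b)) - (ln (\<nu>h 1) - ln (\<nu>s 1))\<bar> \<le> 2 * t / pmin + 2 * t / pmin"
          using hx hy abs_triangle_ineq4[of "ln (\<nu>h b) - ln (\<nu>s b)" "ln (\<nu>h 1) - ln (\<nu>s 1)"] by linarith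
        have "\<bar>ch i - c i\<bar> = \<bar>(ln (\<nu>h b) - ln (\<nu>s b)) - (ln (\<nu>h 1) - ln (\<nu>s 1))\<bar> / \<eta>"
          unfolding eq using eta by (simp add: abs_divide)
        also have "\<dots> \<le> (2 * t / pmin + 2 * t / pmin) / \<eta>" using tri eta by (intro divide_right_mono) auto
        finally show ?thesis .
      qed
      also have "\<dots> = 4 * t / (\<eta> * pmin)" by simp
      finally show ?thesis .
    qed
    have Fs: "(\<Sum>i\<in>I. (rh i \<bullet> \<theta>s - ch i)\<^sup>2) \<le> real (m + n) * (E0 * t\<^sup>2)"
    proof -
      have pt: "(rh i \<bullet> \<theta>s - ch i)\<^sup>2 \<le> E0 * t\<^sup>2" if i: "i \<in> I" for i
      proof -
        have e: "rh i \<bullet> \<theta>s - ch i = (rh i - r i) \<bullet> \<theta>s - (ch i - c i)"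
          using exact i by (simp add: inner_diff_left)
        have x: "((rh i - r i) \<bullet> \<theta>s)\<^sup>2 \<le> (t\<^sup>2 * D\<^sup>2) * B\<theta>"
        proof -
          have "((rh i - r i) \<bullet> \<theta>s)\<^sup>2 \<le> (norm (rh i - r i))\<^sup>2 * (norm \<theta>s)\<^sup>2"
            by (metis Cauchy_Schwarz_ineq power2_norm_eq_inner)
          also have "\<dots> \<le> (t\<^sup>2 * D\<^sup>2) * B\<theta>" by (rule mult_mono[OF rdiff2[OF i] th_bd]) auto
          finally show ?thesis .
        qed
        have y: "(ch i - c i)\<^sup>2 \<le> (4 * t / (\<eta> * pmin))\<^sup>2"
          using power_mono[OF _ abs_ge_zero, of "ch i - c i" _ 2] cdiff[OF i] by (metis power2_abs)
        have "(rh i \<bullet> \<theta>s - ch i)\<^sup>2 \<le> 2 * ((rh i - r i) \<bullet> \<theta>s)\<^sup>2 + 2 * (ch i - c i)\<^sup>2"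
          unfolding e by (rule sq_diff_le)
        also have "\<dots> \<le> 2 * ((t\<^sup>2 * D\<^sup>2) * B\<theta>) + 2 * (4 * t / (\<eta> * pmin))\<^sup>2" using x y by linarith
        also have "\<dots> = E0 * t\<^sup>2" unfolding E0_def by (simp add: power_divide power_mult_distrib field_simps)
        finally show ?thesis .
      qed
      have "(\<Sum>i\<in>I. (rh i \<bullet> \<theta>s - ch i)\<^sup>2) \<le> real (card I) * (E0 * t\<^sup>2)"
        using sum_bounded_above[of I "\<lambda>i. (rh i \<bullet> \<theta>s - ch i)\<^sup>2" "E0 * t\<^sup>2"] pt by simp
      also have "\<dots> \<le> real (m + n) * (E0 * t\<^sup>2)" using cardI E00 by (intro mult_right_mono) auto
      finally show ?thesis .
    qed
    have minim': "\<forall>\<theta>. (\<Sum>i\<in>I. (rh i \<bullet> \<theta>h - ch i)\<^sup>2) \<le> (\<Sum>i\<in>I. (rh i \<bullet> \<theta> - ch i)\<^sup>2)"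
      using minim unfolding ls_Plus rh_def ch_def I_def by blast
    have k4: "\<kappa>0 / 4 > 0" using k0 by simp
    have vb: "(norm (\<theta>h - \<theta>s))\<^sup>2 \<le> 4 / (\<kappa>0 / 4) * (\<Sum>i\<in>I. (rh i \<bullet> \<theta>s - ch i)\<^sup>2)"
      by (rule ls_perturb[OF finI exact minim' coer k4])
    have frob: "frob_dist2 m n (linQ \<phi> \<theta>h) (linQ \<phi> \<theta>s) \<le> \<Phi> * (norm (\<theta>h - \<theta>s))\<^sup>2"
    proof -
      have "frob_dist2 m n (linQ \<phi> \<theta>h) (linQ \<phi> \<theta>s) = (\<Sum>a=1..m. \<Sum>b=1..n. (\<phi> a b \<bullet> (\<theta>h - \<theta>s))\<^sup>2)"
        unfolding frob_dist2_def linQ_def by (simp add: inner_diff_right)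
      also have "\<dots> \<le> (\<Sum>a=1..m. \<Sum>b=1..n. (norm (\<phi> a b))\<^sup>2 * (norm (\<theta>h - \<theta>s))\<^sup>2)"
        by (intro sum_mono) (metis Cauchy_Schwarz_ineq power2_norm_eq_inner)
      also have "\<dots> = \<Phi> * (norm (\<theta>h - \<theta>s))\<^sup>2" unfolding \<Phi>_def by (simp add: sum_distrib_right)
      finally show ?thesis .
    qed
    have "frob_dist2 m n (linQ \<phi> \<theta>h) (linQ \<phi> \<theta>s) \<le> \<Phi> * (4 / (\<kappa>0 / 4) * (real (m + n) * (E0 * t\<^sup>2)))"
    proof -
      have "4 / (\<kappa>0 / 4) * (\<Sum>i\<in>I. (rh i \<bullet> \<theta>s - ch i)\<^sup>2) \<le> 4 / (\<kappa>0 / 4) * (real (m + n) * (E0 * t\<^sup>2))"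
        using Fs k0 by (intro mult_left_mono) auto
      with vb have "(norm (\<theta>h - \<theta>s))\<^sup>2 \<le> 4 / (\<kappa>0 / 4) * (real (m + n) * (E0 * t\<^sup>2))" by linarith
      with frob \<Phi>0 show ?thesis by (meson mult_left_mono order_trans)
    qed
    also have "\<dots> = K * t\<^sup>2" unfolding K_def by (simp add: field_simps)
    finally show "frob_dist2 m n (linQ \<phi> \<theta>h) (linQ \<phi> \<theta>s) \<le> K * t\<^sup>2" .
  qed
  show ?thesis using main K0 e0 by blast
qed



lemma final_arith:
  fixes K C L0 L :: real and m n N :: nat
  assumes K: "K \<ge> 0" and C: "C = 4 * K * (L0 + 1) + 1" and L0: "L0 \<ge> 0" and L: "L \<ge> 0"
    and m: "m \<ge> 2" and N: "N > 0"
  shows "K * (4 * (L0 + L) / N) \<le> C * (real m ^ 2 + real n ^ 2 + real (m + n) * L) / real N"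
proof -
  have C1: "C \<ge> 4 * K * L0" "C \<ge> 4 * K" using K L0 C by (auto simp: algebra_simps mult_nonneg_nonneg)
  have C0: "C \<ge> 0" using C1 K by linarith
  have "real m \<ge> 1" using m by simp
  hence "real m ^ 2 \<ge> 1" by (rule one_le_power)
  hence mm: "real m ^ 2 + real n ^ 2 \<ge> 1" using zero_le_power2[of "real n"] by linarith
  have mn: "real (m + n) \<ge> 1" using m by simp
  have a: "C * (real m ^ 2 + real n ^ 2) \<ge> 4 * K * L0"
    using mult_left_mono[OF mm C0] C1 by linarith
  have b: "C * (real (m + n) * L) \<ge> 4 * K * L"
  proof -
    have "C * (real (m + n) * L) \<ge> C * L" using mult_left_mono[OF mult_right_mono[OF mn L] C0] by simp
    moreover have "C * L \<ge> 4 * K * L" using mult_right_mono[OF C1(2) L] .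
    ultimately show ?thesis by linarith
  qed
  have "K * (4 * (L0 + L)) \<le> C * (real m ^ 2 + real n ^ 2 + real (m + n) * L)"
    using a b by (simp add: algebra_simps)
  thus ?thesis using N by (simp add: divide_right_mono)
qed

theorem mainTheorem3:
  fixes m n :: nat and \<eta> :: real
    and \<phi> :: "nat \<Rightarrow> nat \<Rightarrow> 'v::euclidean_space"
    and \<mu>s \<nu>s :: "nat \<Rightarrow> real"
  assumes "m \<ge> 2" and "n \<ge> 2" and "\<eta> > 0"
  shows "\<exists>C>0. \<forall>\<theta>s M. norm \<theta>s ^ 2 \<le> M \<longrightarrow>
      is_QRE m n \<eta> (linQ \<phi> \<theta>s) \<mu>s \<nu>s \<longrightarrow>
      stacked_rank m n \<phi> \<mu>s \<nu>s = DIM('v) \<longrightarrow>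
      (\<forall>\<delta>. 0 < \<delta> \<and> \<delta> < 1 \<longrightarrow>
        (\<exists>N0. \<forall>N\<ge>N0.
          iid_prob m n N \<mu>s \<nu>s
            (\<lambda>s. (\<forall>a\<in>{1..m}. freqA N s a > 0) \<and> (\<forall>b\<in>{1..n}. freqB N s b > 0) \<and>
                 (\<forall>\<theta>h. (\<forall>\<theta>. ls_obj m n \<eta> \<phi> (freqA N s) (freqB N s) \<theta>h
                              \<le> ls_obj m n \<eta> \<phi> (freqA N s) (freqB N s) \<theta>) \<longrightarrow>
                    frob_dist2 m n (linQ \<phi> \<theta>h) (linQ \<phi> \<theta>s)
                      \<le> C * (real m ^ 2 + real n ^ 2 + real (m + n) * ln (1 / \<delta>)) / real N))
          \<ge> 1 - \<delta>))"
proof (cases "\<exists>\<theta>0. is_QRE m n \<eta> (linQ \<phi> \<theta>0) \<mu>s \<nu>s \<and> stacked_rank m n \<phi> \<mu>s \<nu>s = DIM('v)")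
  case False
  show ?thesis
    apply (intro exI[of _ "1::real"] conjI allI impI)
     apply simp
    apply (insert False)
    apply blast
    done
next
  case True
  then obtain \<theta>0 where q0: "is_QRE m n \<eta> (linQ \<phi> \<theta>0) \<mu>s \<nu>s" and rank: "stacked_rank m n \<phi> \<mu>s \<nu>s = DIM('v)"
    by blast
  obtain K \<epsilon>0 where K0: "K \<ge> 0" and e0: "\<epsilon>0 > 0" "\<epsilon>0 \<le> 1" and det:
    "\<forall>\<theta>s. is_QRE m n \<eta> (linQ \<phi> \<theta>s) \<mu>s \<nu>s \<longrightarrow>
     (\<forall>\<mu>h \<nu>h t. 0 \<le> t \<and> t \<le> \<epsilon>0 \<and> (\<forall>a\<in>{1..m}. \<bar>\<mu>h a - \<mu>s a\<bar> \<le> t) \<and> (\<forall>b\<in>{1..n}. \<bar>\<nu>h b - \<nu>s b\<bar> \<le> t) \<longrightarrow>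
        (\<forall>a\<in>{1..m}. \<mu>h a > 0) \<and> (\<forall>b\<in>{1..n}. \<nu>h b > 0) \<and>
        (\<forall>\<theta>h. (\<forall>\<theta>. ls_obj m n \<eta> \<phi> \<mu>h \<nu>h \<theta>h \<le> ls_obj m n \<eta> \<phi> \<mu>h \<nu>h \<theta>) \<longrightarrow>
            frob_dist2 m n (linQ \<phi> \<theta>h) (linQ \<phi> \<theta>s) \<le> K * t\<^sup>2))"
    using det[OF assms rank q0] by blast
  have m1: "m \<ge> 1" and n1: "n \<ge> 1" using assms by auto
  note pos = qre_pos[OF q0 m1 n1]
  define L0 where "L0 = ln (2 * real (m + n))"
  have L00: "L0 \<ge> 0" unfolding L0_def using assms by simp
  define C where "C = 4 * K * (L0 + 1) + 1"
  have "4 * K * (L0 + 1) \<ge> 0" using K0 L00 by simp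
  hence Cpos: "C > 0" unfolding C_def by linarith
  show ?thesis
  proof (intro exI[of _ C] conjI Cpos allI impI)
    fix \<theta>s :: 'v and M :: real and \<delta> :: real
    assume qs: "is_QRE m n \<eta> (linQ \<phi> \<theta>s) \<mu>s \<nu>s" and "0 < \<delta> \<and> \<delta> < 1"
    hence d0: "0 < \<delta>" and d1: "\<delta> < 1" by auto
    define L where "L = ln (1 / \<delta>)"
    have L0': "L \<ge> 0" unfolding L_def using d0 d1 by simp
    define L2 where "L2 = ln (2 * real (m + n) / \<delta>)"
    have L2eq: "L2 = L0 + L" unfolding L2_def L0_def L_def using d0 assms
      by (simp add: ln_div ln_mult)
    have L2pos: "L2 \<ge> 0" using L2eq L00 L0' by simp
    define N0 where "N0 = nat \<lceil>4 * L2 / \<epsilon>0\<^sup>2\<rceil> + 1"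
    show "\<exists>N0. \<forall>N\<ge>N0. iid_prob m n N \<mu>s \<nu>s
            (\<lambda>s. (\<forall>a\<in>{1..m}. freqA N s a > 0) \<and> (\<forall>b\<in>{1..n}. freqB N s b > 0) \<and>
                 (\<forall>\<theta>h. (\<forall>\<theta>. ls_obj m n \<eta> \<phi> (freqA N s) (freqB N s) \<theta>h
                              \<le> ls_obj m n \<eta> \<phi> (freqA N s) (freqB N s) \<theta>) \<longrightarrow>
                    frob_dist2 m n (linQ \<phi> \<theta>h) (linQ \<phi> \<theta>s)
                      \<le> C * (real m ^ 2 + real n ^ 2 + real (m + n) * ln (1 / \<delta>)) / real N))
          \<ge> 1 - \<delta>"
    proof (intro exI[of _ N0] allI impI)
      fix N :: nat assume NN0: "N \<ge> N0"
      have Npos: "N > 0" using NN0 unfolding N0_def by simp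
      have Nbig: "real N \<ge> 4 * L2 / \<epsilon>0\<^sup>2"
      proof -
        have "4 * L2 / \<epsilon>0\<^sup>2 \<le> real (nat \<lceil>4 * L2 / \<epsilon>0\<^sup>2\<rceil>)" by (rule real_nat_ceiling_ge)
        also have "\<dots> \<le> real N"
        proof -
          have h: "nat \<lceil>4 * L2 / \<epsilon>0\<^sup>2\<rceil> \<le> N" using NN0 unfolding N0_def by linarith
          show ?thesis by (simp only: of_nat_le_iff h)
        qed
        finally show ?thesis .
      qed
      define t where "t = sqrt (4 * L2 / N)"
      have t0: "t \<ge> 0" unfolding t_def using L2pos by simp
      have tsq: "t\<^sup>2 = 4 * L2 / N" unfolding t_def using L2pos by simp
      have te: "t \<le> \<epsilon>0"
      proof -
        have "4 * L2 / N \<le> \<epsilon>0\<^sup>2" using Nbig Npos e0(1) L2pos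
          by (simp add: field_simps)
        hence "t\<^sup>2 \<le> \<epsilon>0\<^sup>2" using tsq by simp
        thus ?thesis using t0 e0(1) by (simp add: power2_le_iff_abs_le)
      qed
      have t2: "t \<le> 2" using te e0 by simp
      have pg: "iid_prob m n N \<mu>s \<nu>s (good m n N \<mu>s \<nu>s t) \<ge> 1 - 2 * real (m + n) * exp (- (N * t\<^sup>2 / 4))"
      proof (rule prob_good[OF _ pos(2) _ pos(4) t0 t2 Npos])
        show "\<forall>a\<in>{1..m}. 0 \<le> \<mu>s a" using pos(1) by (simp add: less_imp_le)
        show "\<forall>b\<in>{1..n}. 0 \<le> \<nu>s b" using pos(3) by (simp add: less_imp_le)
      qed
      have "exp (- (N * t\<^sup>2 / 4)) = exp (- L2)" using tsq Npos by simp
      also have "\<dots> = \<delta> / (2 * real (m + n))" unfolding L2_def using d0 assms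
        by (simp add: exp_minus exp_ln)
      finally have "2 * real (m + n) * exp (- (N * t\<^sup>2 / 4)) = \<delta>" using assms by simp
      with pg have pg': "iid_prob m n N \<mu>s \<nu>s (good m n N \<mu>s \<nu>s t) \<ge> 1 - \<delta>" by simp
      let ?E = "(\<lambda>s. (\<forall>a\<in>{1..m}. freqA N s a > 0) \<and> (\<forall>b\<in>{1..n}. freqB N s b > 0) \<and>
                 (\<forall>\<theta>h. (\<forall>\<theta>. ls_obj m n \<eta> \<phi> (freqA N s) (freqB N s) \<theta>h
                              \<le> ls_obj m n \<eta> \<phi> (freqA N s) (freqB N s) \<theta>) \<longrightarrow>
                    frob_dist2 m n (linQ \<phi> \<theta>h) (linQ \<phi> \<theta>s)
                      \<le> C * (real m ^ 2 + real n ^ 2 + real (m + n) * ln (1 / \<delta>)) / real N))"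
      have arith: "K * t\<^sup>2 \<le> C * (real m ^ 2 + real n ^ 2 + real (m + n) * ln (1 / \<delta>)) / real N"
        using final_arith[OF K0 C_def L00 L0' assms(1) Npos, of n] unfolding tsq L2eq L_def by simp
      have "iid_prob m n N \<mu>s \<nu>s (good m n N \<mu>s \<nu>s t) \<le> iid_prob m n N \<mu>s \<nu>s ?E"
        unfolding iid_Pw
      proof (rule Pw_mono)
        show "\<forall>x\<in>{1..m} \<times> {1..n}. 0 \<le> \<mu>s (fst x) * \<nu>s (snd x)"
          using pos(1,3) by (simp add: less_imp_le mem_Times_iff)
        show "\<forall>s\<in>{..<N} \<rightarrow>\<^sub>E {1..m} \<times> {1..n}. good m n N \<mu>s \<nu>s t s \<longrightarrow> ?E s"
        proof (intro ballI impI)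
          fix s assume "good m n N \<mu>s \<nu>s t s"
          hence g: "0 \<le> t \<and> t \<le> \<epsilon>0 \<and> (\<forall>a\<in>{1..m}. \<bar>freqA N s a - \<mu>s a\<bar> \<le> t) \<and> (\<forall>b\<in>{1..n}. \<bar>freqB N s b - \<nu>s b\<bar> \<le> t)"
            using t0 te unfolding good_def by blast
          note D = det[rule_format, OF qs g]
          show "?E s"
          proof (intro conjI allI impI)
            show "\<forall>a\<in>{1..m}. freqA N s a > 0" using D by blast
            show "\<forall>b\<in>{1..n}. freqB N s b > 0" using D by blast
            fix \<theta>h assume "\<forall>\<theta>. ls_obj m n \<eta> \<phi> (freqA N s) (freqB N s) \<theta>h \<le> ls_obj m n \<eta> \<phi> (freqA N s) (freqB N s) \<theta>"
            hence "frob_dist2 m n (linQ \<phi> \<theta>h) (linQ \<phi> \<theta>s) \<le> K * t\<^sup>2" using D by blast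
            thus "frob_dist2 m n (linQ \<phi> \<theta>h) (linQ \<phi> \<theta>s) \<le> C * (real m ^ 2 + real n ^ 2 + real (m + n) * ln (1 / \<delta>)) / real N"
              using arith by linarith
          qed
        qed
      qed simp
      with pg' show "iid_prob m n N \<mu>s \<nu>s ?E \<ge> 1 - \<delta>" by linarith
    qed
  qed
qed

end
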